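(* Let $F$ be a positive integer, $p\ge1$, and $n_1<n_2<\cdots<n_p<F$ positive integers with $d=\gcd\{n_1,\dots,n_p\}$ satisfying $d\nmid F$. For $i\in\{1,\dots,p\}$ let $d_i=\gcd\{n_1,\dots,n_i\}$; for $j\in\{1,\dots,p-1\}$ let $k_j=\max\{k\in\mathbb{N}\mid n_j+kd_j<n_{j+1}\}$, and let $k_p=\max\{k\in\mathbb{N}\mid n_p+kd_p<F\}$. Then $\{n_1,\dots,n_p\}$ is a $\mathrm{Sat}(F)$-set and $$\mathrm{Sat}(F)[\{n_1,\dots,n_p\}]=\{0\}\cup\bigcup_{j=1}^{p}\{n_j+kd_j\mid 0\le k\le k_j\}\cup\{x\in\mathbb{N}\mid x\ge F+1\}.$$
   Context: A numerical semigroup is a subset $S\subseteq\mathbb{N}$ closed under addition, containing $0$, with $\mathbb{N}\setminus S$ finite; its Frobenius number $\mathrm{F}(S)$ is the largest integer not in $S$. For $A\subseteq\mathbb{N}$ and $a\in A$, let $\mathrm{d}_A(a)=\gcd\{x\in A\mid x\le a\}$. A numerical semigroup $S$ is saturated if $s+\mathrm{d}_S(s)\in S$ for all $s\in S\setminus\{0\}$. For a positive integer $F$, $\mathrm{Sat}(F)$ denotes the set of all saturated numerical semigroups $S$ with $\mathrm{F}(S)=F$. Let $\Delta(F+1)=\{0\}\cup\{x\in\mathbb{N}\mid x\ge F+1\}$. A set $X\subseteq\mathbb{N}$ is a $\mathrm{Sat}(F)$-set if $X\cap\Delta(F+1)=\emptyset$ and there exists $S\in\mathrm{Sat}(F)$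 with $X\subseteq S$. For a $\mathrm{Sat}(F)$-set $X$, $\mathrm{Sat}(F)[X]$ denotes the intersection of all elements of $\mathrm{Sat}(F)$ containing $X$ (the smallest element of $\mathrm{Sat}(F)$ containing $X$). *)

theory Defs
  imports Main
begin

definition numerical_semigroup :: "nat set \<Rightarrow> bool" where
  "numerical_semigroup S \<longleftrightarrow> 0 \<in> S \<and> (\<forall>x\<in>S. \<forall>y\<in>S. x + y \<in> S) \<and> finite (UNIV - S)"

definition frobenius :: "nat set \<Rightarrow> nat" where
  "frobenius S = Max (UNIV - S)"

definition dA :: "nat set \<Rightarrow> nat \<Rightarrow> nat" where
  "dA A a = Gcd {x \<in> A. x \<le> a}"

definition saturated :: "nat set \<Rightarrow> bool" where
  "saturated S \<longleftrightarrow> numerical_semigroup S \<and> (\<forall>s \<in> S - {0}. s + dA S s \<in> S)"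

definition Sat :: "nat \<Rightarrow> nat set set" where
  "Sat F = {S. saturated S \<and> UNIV - S \<noteq> {} \<and> frobenius S = F}"

definition Delta :: "nat \<Rightarrow> nat set" where
  "Delta m = {0} \<union> {x. x \<ge> m}"

definition Sat_set :: "nat \<Rightarrow> nat set \<Rightarrow> bool" where
  "Sat_set F X \<longleftrightarrow> X \<inter> Delta (F + 1) = {} \<and> (\<exists>S \<in> Sat F. X \<subseteq> S)"

definition Sat_closure :: "nat \<Rightarrow> nat set \<Rightarrow> nat set" where
  "Sat_closure F X = \<Inter> {S \<in> Sat F. X \<subseteq> S}"

end

theory Submission
  imports Defs
begin

theorem lemma43:
  fixes F p :: nat and n :: "nat \<Rightarrow> nat"
  assumes "F > 0" and "p \<ge> 1"
    and "\<And>i. 1 \<le> i \<Longrightarrow> i \<le> p \<Longrightarrow> n i > 0"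
    and "\<And>i. 1 \<le> i \<Longrightarrow> i < p \<Longrightarrow> n i < n (Suc i)"
    and "n p < F"
    and "\<not> Gcd (n ` {1..p}) dvd F"
  shows "Sat_set F (n ` {1..p}) \<and>
    Sat_closure F (n ` {1..p}) =
      {0} \<union>
      (\<Union>j\<in>{1..p}. {n j + k * Gcd (n ` {1..j}) | k.
          k \<le> (if j < p
                 then (GREATEST k. n j + k * Gcd (n ` {1..j}) < n (Suc j))
                 else (GREATEST k. n p + k * Gcd (n ` {1..p}) < F))}) \<union>
      {x. x \<ge> F + 1}"
proof -
  define D where "D j = Gcd (n ` {1..j})" for j
  define L where "L j = (if j < p then n (Suc j) else F)" for j
  define K where "K j = (GREATEST k. n j + k * D j < L j)" for j
  have mono: "n i < n j" if "1 \<le> i" "i < j" "j \<le> p" for i j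
    using that
  proof (induction j)
    case 0 then show ?case by simp
  next
    case (Suc j)
    show ?case
    proof (cases "i = j")
      case True then show ?thesis using assms(4) Suc.prems by auto
    next
      case False
      then have "n i < n j" using Suc by auto
      also have "n j < n (Suc j)" using assms(4) Suc.prems by auto
      finally show ?thesis .
    qed
  qed
  have monole: "n i \<le> n j" if "1 \<le> i" "i \<le> j" "j \<le> p" for i j
    using mono[of i j] that by (cases "i = j") auto
  have Ddvd: "D j dvd n i" if "1 \<le> i" "i \<le> j" for i j
    unfolding D_def using that by (auto intro: Gcd_dvd)
  have Dmono: "D j dvd D i" if "i \<le> j" for i j
    unfolding D_def
  proof (rule Gcd_greatest)
    fix y assume "y \<in> n ` {1..i}"
    then have "y \<in> n ` {1..j}" using that by auto
    then show "Gcd (n ` {1..j}) dvd y" by (rule Gcd_dvd)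
  qed
  have Dpos: "D j > 0" if "1 \<le> j" "j \<le> p" for j
  proof -
    have "D j dvd n 1" using Ddvd[of 1 j] that by simp
    moreover have "n 1 > 0" using assms(3)[of 1] assms(2) by simp
    ultimately show ?thesis by (cases "D j = 0") auto
  qed
  have nL: "n j < L j" if "j \<in> {1..p}" for j
    using that assms(4,5) unfolding L_def by auto
  have LF: "L j \<le> F" if "j \<in> {1..p}" for j
    using that assms(5) monole[of "Suc j" p] unfolding L_def by auto
  have Kchar: "(n j + k * D j < L j) \<longleftrightarrow> k \<le> K j" if j: "j \<in> {1..p}" for j k
  proof -
    have bnd: "y \<le> L j" if "n j + y * D j < L j" for y
    proof -
      have "y \<le> y * D j" using Dpos[of j] j by simp
      then show ?thesis using that by linarith
    qed
    have P0: "n j + 0 * D j < L j" using nL[OF j] by simp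
    have "n j + K j * D j < L j"
      unfolding K_def by (rule GreatestI_nat[where P="\<lambda>k. n j + k * D j < L j", OF P0 bnd])
    moreover have "n j + k * D j < L j \<Longrightarrow> k \<le> K j"
      unfolding K_def by (rule Greatest_le_nat[where P="\<lambda>k. n j + k * D j < L j", OF _ bnd])
    moreover have "k \<le> K j \<Longrightarrow> n j + k * D j \<le> n j + K j * D j" by simp
    ultimately show ?thesis by linarith
  qed
  define B where "B = {x. \<exists>j\<in>{1..p}. \<exists>k. x = n j + k * D j \<and> x < L j}"
  define T where "T = {0} \<union> B \<union> {x. x \<ge> F + 1}"
  have Keq: "(if j < p
                 then (GREATEST k. n j + k * Gcd (n ` {1..j}) < n (Suc j))
                 else (GREATEST k. n p + k * Gcd (n ` {1..p}) < F)) = K j"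
    if "j \<in> {1..p}" for j
    using that unfolding K_def L_def D_def by auto
  have RHS: "{0} \<union>
      (\<Union>j\<in>{1..p}. {n j + k * Gcd (n ` {1..j}) | k.
          k \<le> (if j < p
                 then (GREATEST k. n j + k * Gcd (n ` {1..j}) < n (Suc j))
                 else (GREATEST k. n p + k * Gcd (n ` {1..p}) < F))}) \<union>
      {x. x \<ge> F + 1} = T"
  proof -
    have "(\<Union>j\<in>{1..p}. {n j + k * Gcd (n ` {1..j}) | k.
          k \<le> (if j < p
                 then (GREATEST k. n j + k * Gcd (n ` {1..j}) < n (Suc j))
                 else (GREATEST k. n p + k * Gcd (n ` {1..p}) < F))})
        = (\<Union>j\<in>{1..p}. {n j + k * D j | k. k \<le> K j})"
      using Keq unfolding D_def by auto
    also have "\<dots> = B"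
      unfolding B_def using Kchar by blast
    finally show ?thesis unfolding T_def by simp
  qed
  have Bdvd: "D j dvd x" "n j \<le> x" "x < L j" if "j \<in> {1..p}" "x = n j + k * D j" "x < L j" for j k x
    using that Ddvd[of j j] by auto
  have BF: "x < F" if "x \<in> B" for x
    using that LF unfolding B_def by fastforce
  have inblock: "x \<in> B" if j: "j \<in> {1..p}" and "D j dvd x" "n j \<le> x" "x < L j" for j x
  proof -
    have "D j dvd n j" using Ddvd[of j j] j by simp
    then have d: "D j dvd x - n j" using that dvd_diff_nat by blast
    have "x = n j + (x - n j) div D j * D j"
      using d that(3) by simp
    then show ?thesis unfolding B_def using j that(4) by blast
  qed
  have ext0: "\<forall>j. p - j = q \<longrightarrow> j \<in> {1..p} \<longrightarrow> D j dvd x \<longrightarrow> n j \<le> x \<longrightarrow> x < F \<longrightarrow> x \<in> B"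
    for q x
  proof (induction q)
    case 0
    show ?case
    proof (intro allI impI)
      fix j assume "p - j = 0" "j \<in> {1..p}" "D j dvd x" "n j \<le> x" "x < F"
      then show "x \<in> B" using inblock[of j x] unfolding L_def by auto
    qed
  next
    case (Suc q)
    show ?case
    proof (intro allI impI)
      fix j assume h: "p - j = Suc q" "j \<in> {1..p}" "D j dvd x" "n j \<le> x" "x < F"
      show "x \<in> B"
      proof (cases "x < L j")
        case True then show ?thesis using inblock h by blast
      next
        case False
        then have jp: "j < p" and xs: "n (Suc j) \<le> x" using h unfolding L_def by (auto split: if_splits)
        have "D (Suc j) dvd x" using Dmono[of j "Suc j"] h(3) dvd_trans by auto
        moreover have "p - Suc j = q" "Suc j \<in> {1..p}" using h jp by auto
        ultimately show ?thesis using Suc.IH h xs by blast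
      qed
    qed
  qed
  have ext: "x \<in> B" if "j \<in> {1..p}" "D j dvd x" "n j \<le> x" "x < F" for j x
    using ext0[of "p - j" x] that by blast
  have DpF: "\<not> D p dvd F" using assms(6) unfolding D_def by simp
  have extT: "x \<in> T" if "j \<in> {1..p}" "D j dvd x" "n j \<le> x" for j x
  proof -
    have "x \<noteq> F"
    proof
      assume "x = F"
      then have "D j dvd F" using that by simp
      then show False using DpF Dmono[of j p] that(1) dvd_trans by auto
    qed
    then consider "x < F" | "x \<ge> F + 1" by linarith
    then show ?thesis using ext[OF that] unfolding T_def by cases auto
  qed
  have Belim: "\<exists>j\<in>{1..p}. D j dvd x \<and> n j \<le> x \<and> x < L j" if "x \<in> B" for x
    using that Bdvd unfolding B_def by blast
  have addB: "a + b \<in> T" if ab: "a \<in> B" "b \<in> B" for a b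
  proof -
    obtain i where i: "i \<in> {1..p}" "D i dvd a" "n i \<le> a" "a < L i" using Belim[OF ab(1)] by blast
    obtain j where j: "j \<in> {1..p}" "D j dvd b" "n j \<le> b" "b < L j" using Belim[OF ab(2)] by blast
    show ?thesis
    proof (cases "i \<le> j")
      case True
      then have "D j dvd a" using Dmono[of i j] i(2) dvd_trans by blast
      then show ?thesis using extT[of j "a + b"] j by auto
    next
      case False
      then have "D i dvd b" using Dmono[of j i] j(2) dvd_trans by auto
      then show ?thesis using extT[of i "a + b"] i by auto
    qed
  qed
  have addT: "a + b \<in> T" if "a \<in> T" "b \<in> T" for a b
    using that addB unfolding T_def by auto
  have finT: "finite (UNIV - T)"
  proof -
    have "UNIV - T \<subseteq> {..F}" unfolding T_def by auto
    then show ?thesis using finite_subset by blast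
  qed
  have FnT: "F \<notin> T" using BF assms(1) unfolding T_def by auto
  have frobT: "frobenius T = F"
    unfolding frobenius_def
  proof (rule Max_eqI[OF finT])
    show "y \<le> F" if "y \<in> UNIV - T" for y using that unfolding T_def by auto
    show "F \<in> UNIV - T" using FnT by simp
  qed
  have dAT: "s + dA T s \<in> T" if "s \<in> T" "s \<noteq> 0" for s
  proof (cases "s \<in> B")
    case False
    then show ?thesis using that unfolding T_def by auto
  next
    case True
    obtain j where j: "j \<in> {1..p}" "D j dvd s" "n j \<le> s" "s < L j" using Belim[OF True] by blast
    have "D j dvd dA T s"
      unfolding dA_def
    proof (rule Gcd_greatest)
      fix x assume x: "x \<in> {x \<in> T. x \<le> s}"
      show "D j dvd x"
      proof (cases "x \<in> B")
        case True
        obtain i where i: "i \<in> {1..p}" "D i dvd x" "n i \<le> x" "x < L i" using Belim[OF True] by blast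
        have "i \<le> j"
        proof (rule ccontr)
          assume "\<not> i \<le> j"
          then have "j < p" "n (Suc j) \<le> n i" using monole[of "Suc j" i] i(1) j(1) by auto
          then show False using i(3) x j(4) unfolding L_def by auto
        qed
        then show ?thesis using Dmono[of i j] i(2) dvd_trans by blast
      next
        case False
        have "s < F" using BF \<open>s \<in> B\<close> by blast
        then have "x = 0" using x False unfolding T_def by auto
        then show ?thesis by simp
      qed
    qed
    then show ?thesis using extT[of j "s + dA T s"] j by auto
  qed
  have TSat: "T \<in> Sat F"
    unfolding Sat_def saturated_def numerical_semigroup_def
    using addT finT frobT dAT FnT unfolding T_def by blast
  have XT: "n ` {1..p} \<subseteq> T"
  proof
    fix x assume "x \<in> n ` {1..p}"
    then obtain j where "j \<in> {1..p}" "x = n j" by auto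
    then show "x \<in> T" using inblock[of j x] Ddvd[of j j] nL unfolding T_def by auto
  qed
  have sat_step: "\<forall>t. t \<in> S \<longrightarrow> t > 0 \<longrightarrow> dA S t dvd c \<longrightarrow> t + c \<in> S"
    if S: "saturated S" for S c
  proof (induction c rule: less_induct)
    case (less c)
    show ?case
    proof (intro allI impI)
      fix t assume t: "t \<in> S" "t > 0" "dA S t dvd c"
      show "t + c \<in> S"
      proof (cases "c = 0")
        case True then show ?thesis using t by simp
      next
        case False
        define e where "e = dA S t"
        have e0: "e \<noteq> 0"
          unfolding e_def dA_def using t Gcd_0_iff[of "{x \<in> S. x \<le> t}"] by auto
        have t': "t + e \<in> S" using S t unfolding saturated_def e_def by auto
        have "dA S (t + e) dvd e"
          unfolding dA_def e_def
          by (rule Gcd_greatest) (auto intro: Gcd_dvd)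
        moreover have "e dvd c - e" using t(3) unfolding e_def by simp
        ultimately have d: "dA S (t + e) dvd c - e" using dvd_trans by blast
        have "e \<le> c" using t(3) False e_def dvd_imp_le by auto
        then have "c - e < c" using e0 False by simp
        then have "t + e + (c - e) \<in> S" using less.IH t' t d by auto
        then show ?thesis using \<open>e \<le> c\<close> by simp
      qed
    qed
  qed
  have minimal: "T \<subseteq> S" if S: "S \<in> Sat F" "n ` {1..p} \<subseteq> S" for S
  proof
    fix x assume x: "x \<in> T"
    have sat: "saturated S" and ns: "numerical_semigroup S" and fr: "Max (UNIV - S) = F"
      and ne: "UNIV - S \<noteq> {}"
      using S(1) unfolding Sat_def saturated_def frobenius_def by auto
    have fin: "finite (UNIV - S)" using ns unfolding numerical_semigroup_def by auto
    consider "x = 0" | "x \<in> B" | "x \<ge> F + 1" using x unfolding T_def by auto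
    then show "x \<in> S"
    proof cases
      case 1 then show ?thesis using ns unfolding numerical_semigroup_def by auto
    next
      case 3
      show ?thesis
      proof (rule ccontr)
        assume "x \<notin> S"
        then have "x \<le> Max (UNIV - S)" using fin by (intro Max_ge) auto
        then show False using fr 3 by simp
      qed
    next
      case 2
      then obtain j k where j: "j \<in> {1..p}" "x = n j + k * D j" unfolding B_def by blast
      have njS: "n j \<in> S" using S(2) j(1) by auto
      have njp: "n j > 0" using assms(3) j(1) by auto
      have "dA S (n j) dvd D j"
        unfolding D_def dA_def
      proof (rule Gcd_greatest)
        fix y assume "y \<in> n ` {1..j}"
        then obtain i where i: "i \<in> {1..j}" "y = n i" by auto
        have "n i \<in> S" using S(2) i(1) j(1) by auto
        moreover have "n i \<le> n j" using monole[of i j] i j by auto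
        ultimately show "Gcd {x \<in> S. x \<le> n j} dvd y" using i by (auto intro: Gcd_dvd)
      qed
      then have "dA S (n j) dvd k * D j" by simp
      then show ?thesis using sat_step[OF sat, of "k * D j"] njS njp j(2) by auto
    qed
  qed
  have Xdelta: "n ` {1..p} \<inter> Delta (F + 1) = {}"
  proof -
    have nj: "n j \<noteq> 0 \<and> n j < F + 1" if "j \<in> {1..p}" for j
      using assms(3)[of j] monole[of j p] assms(5) that by auto
    show ?thesis
    proof (rule equals0I)
      fix y assume "y \<in> n ` {1..p} \<inter> Delta (F + 1)"
      then obtain j where j: "j \<in> {1..p}" "y = n j" "y \<in> Delta (F + 1)" by blast
      have "n j \<noteq> 0 \<and> n j < F + 1" using j(1) by (rule nj)
      then show False using j(2,3) unfolding Delta_def by auto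
    qed
  qed
  have ss: "Sat_set F (n ` {1..p})"
    unfolding Sat_set_def using Xdelta TSat XT by blast
  have cl: "Sat_closure F (n ` {1..p}) = T"
    unfolding Sat_closure_def
  proof (rule antisym)
    show "\<Inter> {S \<in> Sat F. n ` {1..p} \<subseteq> S} \<subseteq> T" using TSat XT by blast
    show "T \<subseteq> \<Inter> {S \<in> Sat F. n ` {1..p} \<subseteq> S}" using minimal by blast
  qed
  show ?thesis using ss cl RHS by simp
qed

end
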